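(* Let $p\geq 2$ be a prime and let $\mathbf{k}$ be a field of characteristic $p$ (so $\mathbb{F}_p\subseteq\mathbf{k}$). Then the polynomial $\mathcal{I}_p\in\mathbb{F}_p[f,g,\alpha_1,\alpha_2,t]\subseteq \mathbf{k}(f,g,\alpha_1,\alpha_2,t)$ is a simultaneous integral of motion of $T_1$, $T_2$ and $D_t$, i.e. $$T_1(\mathcal{I}_p)=T_2(\mathcal{I}_p)=\mathcal{I}_p,\qquad D_t\mathcal{I}_p=0.$$ Moreover $\mathcal{I}_p$ has total degree $3p$ and bi-degree $(2p,2p)$ in $(f,g)$, and $$\mathcal{I}_p=-f^{2p}g^p+f^pg^{2p}+O(f,g)$$ for a polynomial $O(f,g)\in\mathbb{F}_p[f,g,\alpha_1,\alpha_2,t]$ of degree less than $2p$ in $f$ and degree less than $2p$ in $g$.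
   Context: Let $\mathbf{k}$ be a field of characteristic $p$. On the rational function field $\mathbf{k}(f,g,\alpha_1,\alpha_2,t)$ let $D_t$ be the $\mathbf{k}$-linear derivation with $D_t f=f(2g-f-t)-\alpha_1$, $D_t g=g(2f-g+t)+\alpha_2$, $D_t\alpha_1=D_t\alpha_2=0$, $D_t t=1$ (the fourth Painlevé equation). Let $T_1,T_2$ be the $\mathbf{k}$-linear field automorphisms given by $T_1:(f,g,\alpha_1,\alpha_2,t)\mapsto(\bar f^1,\bar g^1,\alpha_1+1,\alpha_2,t)$ and $T_2:(f,g,\alpha_1,\alpha_2,t)\mapsto(\bar f^2,\bar g^2,\alpha_1,\alpha_2+1,t)$, where $\bar f^1=\frac{(\alpha_1+\alpha_2)f}{\alpha_1-fg}-f+g-t-\frac{\alpha_1}{f}$, $\bar g^1=\frac{(\alpha_2+fg)f}{\alpha_1-fg}$, $\bar g^2=\frac{(\alpha_1+\alpha_2)g}{\alpha_2+fg}+f-g+t+\frac{\alpha_2}{g}$, $\bar f^2=\frac{(\alpha_1-fg)g}{\alpha_2+fg}$ (the difference second Painlevé equation). Define the $2\times2$ matrix polynomial in $z$ with coefficients in $\mathbb{Z}[f,g,\alpha_1,\alpha_2,t,w,w^{-1}]$: $$A(z)=\begin{bmatrix}w&0\\0&1\end{bmatrix}\begin{bmatrix}1&0\\ f-tfg-tz&1\end{bmatrix}\begin{bmatrix}g&1\\ z+\alpha_2&0\end{bmatrix}\begin{bmatrix}-f&1\\ z&0\end{bmatrix}\begin{bmatrix}tz-g+tfg&1\\ z-\alpha_1&0\end{bmatrix}\begin{bmatrix}w^{-1}&0\\0&1\end{bmatrix}.$$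 Define $\mathcal{I}_p:=\operatorname{Tr}[A(p-1)A(p-2)\cdots A(1)A(0)]$ computed in characteristic $p$; it is an element of $\mathbb{F}_p[f,g,\alpha_1,\alpha_2,t]$ (independent of $w$). *)

theory Defs
  imports "HOL-Library.Poly_Mapping" "HOL-Computational_Algebra.Fraction_Field" "HOL-Computational_Algebra.Primes"
begin

type_synonym 'a mpoly = "(nat \<Rightarrow>\<^sub>0 nat) \<Rightarrow>\<^sub>0 'a"

definition Var :: "nat \<Rightarrow> 'a::comm_ring_1 mpoly" where
  "Var i = Poly_Mapping.single (Poly_Mapping.single i 1) 1"

definition Const :: "'a::comm_ring_1 \<Rightarrow> 'a mpoly" where
  "Const c = Poly_Mapping.single 0 c"

abbreviation "vf \<equiv> Var 0"
abbreviation "vg \<equiv> Var 1"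
abbreviation "va1 \<equiv> Var 2"
abbreviation "va2 \<equiv> Var 3"
abbreviation "vt \<equiv> Var 4"

definition mpeval :: "('a::comm_ring_1 \<Rightarrow> 'r::comm_ring_1) \<Rightarrow> (nat \<Rightarrow> 'r) \<Rightarrow> 'a mpoly \<Rightarrow> 'r" where
  "mpeval phi v P = (\<Sum>m\<in>Poly_Mapping.keys P.
      phi (Poly_Mapping.lookup P m) * (\<Prod>i\<in>Poly_Mapping.keys m. v i ^ Poly_Mapping.lookup m i))"

definition RF :: "'a::field mpoly \<Rightarrow> 'a mpoly fract" where
  "RF P = Fract P 1"

definition pdiff :: "nat \<Rightarrow> 'a::comm_ring_1 mpoly \<Rightarrow> 'a mpoly" where
  "pdiff i P = (\<Sum>m\<in>Poly_Mapping.keys P.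
      Poly_Mapping.single (m - Poly_Mapping.single i 1)
        (of_nat (Poly_Mapping.lookup m i) * Poly_Mapping.lookup P m))"

definition vdeg :: "nat \<Rightarrow> 'a::zero mpoly \<Rightarrow> nat" where
  "vdeg i P = Max (insert 0 ((\<lambda>m. Poly_Mapping.lookup m i) ` Poly_Mapping.keys P))"

definition tdeg :: "'a::zero mpoly \<Rightarrow> nat" where
  "tdeg P = Max (insert 0 ((\<lambda>m. \<Sum>i\<in>Poly_Mapping.keys m. Poly_Mapping.lookup m i)
                            ` Poly_Mapping.keys P))"

text \<open>Coefficients in the prime field F_p (image of the integers).\<close>
definition prime_field_coeffs :: "'a::comm_ring_1 mpoly \<Rightarrow> bool" where
  "prime_field_coeffs P \<longleftrightarrow> (\<forall>m. Poly_Mapping.lookup P m \<in> range of_int)"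

definition Dt :: "'a::comm_ring_1 mpoly \<Rightarrow> 'a mpoly" where
  "Dt P = pdiff 0 P * (vf * (2 * vg - vf - vt) - va1)
        + pdiff 1 P * (vg * (2 * vf - vg + vt) + va2)
        + pdiff 4 P"

definition fbar1 :: "'a::field mpoly fract" where
  "fbar1 = (let f = RF vf; g = RF vg; a1 = RF va1; a2 = RF va2; t = RF vt in
     (a1 + a2) * f / (a1 - f * g) - f + g - t - a1 / f)"

definition gbar1 :: "'a::field mpoly fract" where
  "gbar1 = (let f = RF vf; g = RF vg; a1 = RF va1; a2 = RF va2 in
     (a2 + f * g) * f / (a1 - f * g))"

definition gbar2 :: "'a::field mpoly fract" where
  "gbar2 = (let f = RF vf; g = RF vg; a1 = RF va1; a2 = RF va2; t = RF vt in
     (a1 + a2) * g / (a2 + f * g) + f - g + t + a2 / g)"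

definition fbar2 :: "'a::field mpoly fract" where
  "fbar2 = (let f = RF vf; g = RF vg; a1 = RF va1; a2 = RF va2 in
     (a1 - f * g) * g / (a2 + f * g))"

text \<open>T_1 and T_2 applied to a polynomial P (as an element of the rational function field):
  the field automorphism is determined by its values on the generators.\<close>
definition T1 :: "'a::field mpoly \<Rightarrow> 'a mpoly fract" where
  "T1 P = mpeval (\<lambda>c. RF (Const c))
     (\<lambda>i. if i = 0 then fbar1 else if i = 1 then gbar1
          else if i = 2 then RF va1 + 1 else RF (Var i)) P"

definition T2 :: "'a::field mpoly \<Rightarrow> 'a mpoly fract" where
  "T2 P = mpeval (\<lambda>c. RF (Const c))
     (\<lambda>i. if i = 0 then fbar2 else if i = 1 then gbar2
          else if i = 3 then RF va2 + 1 else RF (Var i)) P"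

text \<open>2x2 matrices as tuples (a11, a12, a21, a22).\<close>
type_synonym 'a mat2 = "'a \<times> 'a \<times> 'a \<times> 'a"

fun m2mul :: "'a::comm_ring_1 mat2 \<Rightarrow> 'a mat2 \<Rightarrow> 'a mat2" where
  "m2mul (a, b, c, d) (e, f, g, h) = (a*e + b*g, a*f + b*h, c*e + d*g, c*f + d*h)"

definition m2one :: "'a::comm_ring_1 mat2" where
  "m2one = (1, 0, 0, 1)"

fun m2tr :: "'a::comm_ring_1 mat2 \<Rightarrow> 'a" where
  "m2tr (a, b, c, d) = a + d"

text \<open>A(z) with entries in a commutative ring; w and wi stand for w and w^(-1).\<close>
definition Amat :: "'a::comm_ring_1 \<Rightarrow> 'a \<Rightarrow> 'a \<Rightarrow> 'a \<Rightarrow> 'a \<Rightarrow> 'a \<Rightarrow> 'a \<Rightarrow> 'a \<Rightarrow> 'a mat2" where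
  "Amat w wi f g a1 a2 t z =
     m2mul (w, 0, 0, 1)
     (m2mul (1, 0, f - t*f*g - t*z, 1)
     (m2mul (g, 1, z + a2, 0)
     (m2mul (-f, 1, z, 0)
     (m2mul (t*z - g + t*f*g, 1, z - a1, 0)
            (wi, 0, 0, 1)))))"

fun prodA :: "'a::comm_ring_1 \<Rightarrow> 'a \<Rightarrow> 'a \<Rightarrow> 'a \<Rightarrow> 'a \<Rightarrow> 'a \<Rightarrow> 'a \<Rightarrow> nat \<Rightarrow> 'a mat2" where
  "prodA w wi f g a1 a2 t 0 = m2one"
| "prodA w wi f g a1 a2 t (Suc n) =
     m2mul (Amat w wi f g a1 a2 t (of_nat n)) (prodA w wi f g a1 a2 t n)"

text \<open>I_p = Tr[A(p-1) ... A(0)], computed in the polynomial ring over a field of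
  characteristic p. Since it is independent of w (conjugation by diag(w,1)), we take w = 1.\<close>
definition Ip :: "nat \<Rightarrow> 'a::field mpoly" where
  "Ip p = m2tr (prodA 1 1 vf vg va1 va2 vt p)"

end

theory Submission
  imports Defs
begin

lemma m2mul_assoc: "m2mul (m2mul X Y) Z = m2mul X (m2mul Y Z)"
  by (cases X; cases Y; cases Z) (simp add: algebra_simps)

lemma m2tr_comm: "m2tr (m2mul X Y) = m2tr (m2mul Y X)"
  by (cases X; cases Y) (simp add: algebra_simps)

lemma m2mul_one_left[simp]: "m2mul m2one X = X" and m2mul_one_right[simp]: "m2mul X m2one = X"
  by (cases X, simp add: m2one_def)+

fun prodM :: "('a::comm_ring_1 \<Rightarrow> 'a mat2) \<Rightarrow> nat \<Rightarrow> 'a mat2" where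
  "prodM X 0 = m2one"
| "prodM X (Suc n) = m2mul (X (of_nat n)) (prodM X n)"

lemma prodA_prodM: "prodA w wi f g a1 a2 t n = prodM (Amat w wi f g a1 a2 t) n"
  by (induction n) auto

lemma telescope:
  assumes "\<And>z. m2mul (X z) (R z) = m2mul (R (z + 1)) (Y z)"
  shows "m2mul (prodM X n) (R 0) = m2mul (R (of_nat n)) (prodM Y n)"
proof (induction n)
  case 0 then show ?case by simp
next
  case (Suc n)
  have "m2mul (prodM X (Suc n)) (R 0) = m2mul (X (of_nat n)) (m2mul (R (of_nat n)) (prodM Y n))"
    by (simp add: m2mul_assoc Suc)
  also have "\<dots> = m2mul (R (of_nat (Suc n))) (prodM Y (Suc n))"
    by (simp add: m2mul_assoc[symmetric] assms add.commute)
  finally show ?case .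
qed

lemma prodM_shift: "prodM (\<lambda>z. Y (z - 1)) (Suc n) = m2mul (prodM Y n) (Y (-1))"
proof (induction n)
  case 0 then show ?case by simp
next
  case (Suc n)
  have "prodM (\<lambda>z. Y (z - 1)) (Suc (Suc n)) = m2mul (Y (of_nat n)) (prodM (\<lambda>z. Y (z - 1)) (Suc n))"
    by simp
  then show ?case using Suc by (simp add: m2mul_assoc)
qed

lemma tr_shift:
  assumes "of_nat p = (0::'a::comm_ring_1)" "p > 0"
  shows "m2tr (prodM (\<lambda>z. Y (z - 1)) p) = m2tr (prodM (Y :: 'a \<Rightarrow> 'a mat2) p)"
proof -
  obtain n where p: "p = Suc n" using assms(2) by (cases p) auto
  have "of_nat n = (-1::'a)" using assms(1) p by (simp add: eq_neg_iff_add_eq_0 add.commute)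
  have "m2tr (prodM (\<lambda>z. Y (z - 1)) p) = m2tr (m2mul (prodM Y n) (Y (-1)))"
    by (simp only: p prodM_shift)
  also have "\<dots> = m2tr (prodM Y p)" using \<open>of_nat n = -1\<close> p by (simp add: m2tr_comm)
  finally show ?thesis .
qed

lemma tr_conj_field:
  fixes X Y R :: "'a::field mat2"
  assumes "m2mul X R = m2mul R Y" and "fst R * snd (snd (snd R)) - fst (snd R) * fst (snd (snd R)) \<noteq> 0"
  shows "m2tr X = m2tr Y"
proof -
  obtain x1 x2 x3 x4 where X: "X = (x1,x2,x3,x4)" by (cases X) auto
  obtain y1 y2 y3 y4 where Y: "Y = (y1,y2,y3,y4)" by (cases Y) auto
  obtain a b c d where R: "R = (a,b,c,d)" by (cases R) auto
  have e: "x1*a + x2*c = a*y1 + b*y3" "x1*b+x2*d = a*y2+b*y4" "x3*a+x4*c = c*y1+d*y3" "x3*b+x4*d = c*y2+d*y4"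
    using assms(1) by (simp_all add: X Y R)
  have "(a*d - b*c) * (x1 + x4) = (a*d - b*c) * (y1 + y4)"
    using e by algebra
  then show ?thesis using assms(2) by (simp add: X Y R)
qed

definition Lf :: "'a::comm_ring_1 \<Rightarrow> 'a mat2" where "Lf c = (1, 0, c, 1)"

definition Ap :: "'a::comm_ring_1 \<Rightarrow> 'a \<Rightarrow> 'a \<Rightarrow> 'a \<Rightarrow> 'a \<Rightarrow> 'a \<Rightarrow> 'a mat2" where
  "Ap f g a1 a2 t z = m2mul (g, 1, z + a2, 0) (m2mul (-f, 1, z, 0)
      (m2mul (t*z - g + t*f*g, 1, z - a1, 0) (Lf (f - t*f*g - t*(z - 1)))))"

lemma rot_prod:
  "m2mul (prodM (Amat 1 1 f g a1 a2 t) n) (Lf (f - t*f*g - t*(-1)))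
   = m2mul (Lf (f - t*f*g - t*(of_nat n - 1))) (prodM (Ap f g a1 a2 t) n)"
proof (induction n)
  case 0 then show ?case by simp
next
  case (Suc n)
  let ?M = "m2mul (g, 1, of_nat n + a2, 0) (m2mul (-f, 1, of_nat n, 0)
      (t*of_nat n - g + t*f*g, 1, of_nat n - a1, 0))"
  have A: "Amat 1 1 f g a1 a2 t (of_nat n) = m2mul (Lf (f - t*f*g - t*(of_nat (Suc n) - 1))) ?M"
    unfolding Amat_def Lf_def by (simp add: algebra_simps)
  have B: "Ap f g a1 a2 t (of_nat n) = m2mul ?M (Lf (f - t*f*g - t*(of_nat n - 1)))"
    unfolding Ap_def Lf_def by (simp add: algebra_simps)
  show ?case
    by (simp only: prodM.simps A B m2mul_assoc Suc)
qed

lemma tr_Lf: assumes "m2mul X (Lf c) = m2mul (Lf c) Y" shows "m2tr X = m2tr Y"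
  using assms by (cases X; cases Y) (auto simp: Lf_def algebra_simps)

lemma rot_tr:
  assumes "of_nat n = (0::'a::comm_ring_1)"
  shows "m2tr (prodM (Amat 1 1 f g a1 a2 t) n) = m2tr (prodM (Ap f g a1 a2 (t::'a)) n)"
  using rot_prod[of f g a1 a2 t n] assms by (intro tr_Lf[of _ "f - t*f*g - t*(-1)"]) simp

lemma Ap_explicit: "Ap f g a1 a2 t z =
  (t*z - g*a1 + f*z - f*g*t + f*g^2 - f^2*g,
   z - f*g,
   z^2 + a2*z - a1*z - a1*a2 - f*t*z - f*a2*t + f*g*z + f*g*a2 - f^2*z - f^2*a2,
   - f*z - f*a2)"
  unfolding Ap_def Lf_def by (simp add: algebra_simps power2_eq_square)

lemma lax_T2_gen:
  fixes f g a1 a2 t z u v :: "'a::field"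
  assumes "u * (a2 + f*g) = (a1 - f * g) * g"
  and "v * g * (a2 + f*g) = (a1 + a2) * g * g + (f - g + t) * g * (a2 + f*g) + a2 * (a2 + f*g)"
  and "di * (a2 + f*g) = 1" "gi * g = 1"
  shows "m2mul (Ap u v a1 (a2 + 1) t z) (f + u + t, 1, z + a2, 0)
       = m2mul (f + u + t, 1, z + 1 + a2, 0) (Ap f g a1 a2 t z)"
  using assms unfolding Ap_explicit by (simp only: m2mul.simps prod_eq_iff fst_conv snd_conv, intro conjI; algebra)

lemma lax_T1_gen:
  fixes f g a1 a2 t z u v :: "'a::field"
  assumes "di * (a1 - f*g) = 1" "fi * f = 1"
  and "u = (a1 + a2) * f * di - f + g - t - a1 * fi"
  and "v = (a2 + f*g) * f * di"
  shows "m2mul (Ap u v (a1 + 1) a2 t z) (m2mul (v, 1, z + a2 - 1, 0) (f - u + v, 1, z - 1, 0))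
       = m2mul (m2mul (v, 1, z + 1 + a2 - 1, 0) (f - u + v, 1, z + 1 - 1, 0)) (Ap f g a1 a2 t (z - 1))"
  using assms unfolding Ap_explicit by (simp only: m2mul.simps prod_eq_iff fst_conv snd_conv, intro conjI; algebra)

fun m2add :: "'a::comm_ring_1 mat2 \<Rightarrow> 'a mat2 \<Rightarrow> 'a mat2" where
  "m2add (a, b, c, d) (e, f, g, h) = (a + e, b + f, c + g, d + h)"
fun m2sub :: "'a::comm_ring_1 mat2 \<Rightarrow> 'a mat2 \<Rightarrow> 'a mat2" where
  "m2sub (a, b, c, d) (e, f, g, h) = (a - e, b - f, c - g, d - h)"

lemma tr_commutator: "m2tr (m2sub (m2mul B P) (m2mul P B)) = (0::'a::comm_ring_1)"
  by (cases B; cases P) (simp add: algebra_simps)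

lemma comm_lemma: "m2add (m2mul (m2sub (m2mul C A) (m2mul A E)) P) (m2mul A (m2sub (m2mul E P) (m2mul P F)))
  = m2sub (m2mul C (m2mul A P)) (m2mul (m2mul A P) (F::'a::comm_ring_1 mat2))"
  by (cases A; cases C; cases E; cases P; cases F) (simp add: algebra_simps)

locale deriv =
  fixes D :: "'a::comm_ring_1 \<Rightarrow> 'a"
  assumes D_add: "D (x + y) = D x + D y"
  and D_mult: "D (x * y) = x * D y + D x * y"
begin

lemma D_zero[simp]: "D 0 = 0"
  using D_add[of 0 0] by simp
lemma D_minus: "D (- x) = - D x"
  using D_add[of x "-x"] by (simp add: eq_neg_iff_add_eq_0 add.commute)
lemma D_diff: "D (x - y) = D x - D y"
  using D_add[of x "-y"] by (simp add: D_minus)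
lemma D_one[simp]: "D 1 = 0"
  using D_mult[of 1 1] by simp
lemma D_of_nat[simp]: "D (of_nat n) = 0"
  by (induction n) (simp_all add: D_add)
lemma D_numeral[simp]: "D (numeral n) = 0"
  using D_of_nat[of "numeral n"] by simp
lemma D_power2: "D (x^2) = 2 * x * D x"
  by (simp add: power2_eq_square D_mult algebra_simps)

definition Dm :: "'a mat2 \<Rightarrow> 'a mat2" where
  "Dm X = (case X of (a, b, c, d) \<Rightarrow> (D a, D b, D c, D d))"

lemma Dm_mul: "Dm (m2mul X Y) = m2add (m2mul (Dm X) Y) (m2mul X (Dm Y))"
  by (cases X; cases Y) (simp add: Dm_def D_add D_mult algebra_simps)

lemma Dm_tr: "D (m2tr X) = m2tr (Dm X)"
  by (cases X) (simp add: Dm_def D_add)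

lemma Dm_one[simp]: "Dm m2one = (0,0,0,0)"
  by (simp add: Dm_def m2one_def)

lemma Dm_prod:
  assumes "\<And>k. Dm (X (of_nat k)) = m2sub (m2mul (B (of_nat k + 1)) (X (of_nat k))) (m2mul (X (of_nat k)) (B (of_nat k)))"
  shows "Dm (prodM X n) = m2sub (m2mul (B (of_nat n)) (prodM X n)) (m2mul (prodM X n) (B 0))"
proof (induction n)
  case 0 then show ?case by (cases "B 0") (simp add: m2one_def Dm_def)
next
  case (Suc n)
  have e1: "Dm (X (of_nat n)) = m2sub (m2mul (B (of_nat n + 1)) (X (of_nat n))) (m2mul (X (of_nat n)) (B (of_nat n)))"
    by (rule assms)
  have "Dm (prodM X (Suc n)) = m2add (m2mul (Dm (X (of_nat n))) (prodM X n)) (m2mul (X (of_nat n)) (Dm (prodM X n)))"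
    by (simp add: Dm_mul)
  also have "\<dots> = m2sub (m2mul (B (of_nat n + 1)) (m2mul (X (of_nat n)) (prodM X n))) (m2mul (m2mul (X (of_nat n)) (prodM X n)) (B 0))"
    unfolding e1 Suc by (rule comm_lemma)
  finally show ?case by (simp add: add.commute)
qed

lemma lax_Dt:
  assumes "D f = f*(2*g - f - t) - a1" "D g = g*(2*f - g + t) + a2" "D a1 = 0" "D a2 = 0" "D t = 1" "D z = 0"
  shows "Dm (Ap f g a1 a2 t z) = m2sub (m2mul (2*f + t, 1, z + 1 + a2 - 1, 0) (Ap f g a1 a2 t z))
            (m2mul (Ap f g a1 a2 t z) (2*f + t, 1, z + a2 - 1, 0))"
  unfolding Ap_explicit Dm_def
  by (simp add: D_add D_diff D_mult D_minus D_power2 assms) (simp add: algebra_simps power2_eq_square)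

lemma Dt_trace_zero:
  assumes "D f = f*(2*g - f - t) - a1" "D g = g*(2*f - g + t) + a2" "D a1 = 0" "D a2 = 0" "D t = 1"
  and "of_nat n = (0::'a)"
  shows "D (m2tr (prodM (Ap f g a1 a2 t) n)) = 0"
proof -
  let ?B = "\<lambda>z. (2*f + t, 1, z + a2 - 1, 0)"
  have "Dm (prodM (Ap f g a1 a2 t) n) = m2sub (m2mul (?B (of_nat n)) (prodM (Ap f g a1 a2 t) n)) (m2mul (prodM (Ap f g a1 a2 t) n) (?B 0))"
  proof (rule Dm_prod)
    fix k :: nat
    show "Dm (Ap f g a1 a2 t (of_nat k)) = m2sub (m2mul (?B (of_nat k + 1)) (Ap f g a1 a2 t (of_nat k))) (m2mul (Ap f g a1 a2 t (of_nat k)) (?B (of_nat k)))"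
      using lax_Dt[of f g t a1 a2 "of_nat k"] assms by (simp only: D_of_nat add.assoc)
  qed
  then have "D (m2tr (prodM (Ap f g a1 a2 t) n)) = m2tr (m2sub (m2mul (?B 0) (prodM (Ap f g a1 a2 t) n)) (m2mul (prodM (Ap f g a1 a2 t) n) (?B 0)))"
    using assms(6) by (simp only: Dm_tr)
  also have "\<dots> = 0"
    by (rule tr_commutator)
  finally show ?thesis .
qed

end

lemma update_single_add: "a \<notin> Poly_Mapping.keys f \<Longrightarrow> Poly_Mapping.update a b f = Poly_Mapping.single a b + f"
  by (rule poly_mapping_eqI) (auto simp: lookup_update lookup_add lookup_single in_keys_iff)

lemma pm_induct[case_names zero add]:
  assumes "P 0" "\<And>a b f. a \<notin> Poly_Mapping.keys f \<Longrightarrow> b \<noteq> 0 \<Longrightarrow> P f \<Longrightarrow> P (Poly_Mapping.single a b + f)"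
  shows "P f"
  using assms by (induction f rule: update_induct) (simp_all add: update_single_add)

lemma mpoly_bilinear_induct:
  fixes F G :: "'a::comm_ring_1 mpoly \<Rightarrow> 'a mpoly \<Rightarrow> 'b::ab_group_add"
  assumes F0: "\<And>Q. F 0 Q = G 0 Q" "\<And>P. F P 0 = G P 0"
  and Fadd1: "\<And>P1 P2 Q. F (P1 + P2) Q = F P1 Q + F P2 Q" "\<And>P1 P2 Q. G (P1 + P2) Q = G P1 Q + G P2 Q"
  and Fadd2: "\<And>P Q1 Q2. F P (Q1 + Q2) = F P Q1 + F P Q2" "\<And>P Q1 Q2. G P (Q1 + Q2) = G P Q1 + G P Q2"
  and mono: "\<And>a b c d. F (Poly_Mapping.single a b) (Poly_Mapping.single c d) = G (Poly_Mapping.single a b) (Poly_Mapping.single c d)"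
  shows "F P Q = G P Q"
proof (induction P rule: pm_induct)
  case zero then show ?case by (rule F0)
next
  case (add a b f)
  have "F (Poly_Mapping.single a b) Q = G (Poly_Mapping.single a b) Q"
  proof (induction Q rule: pm_induct)
    case zero then show ?case by (rule F0)
  next
    case (add c d g) then show ?case by (simp add: Fadd2 mono)
  qed
  with add show ?case by (simp add: Fadd1)
qed

lemma var_pow: "(Var i :: 'a::comm_ring_1 mpoly) ^ n = Poly_Mapping.single (Poly_Mapping.single i n) 1"
  by (induction n) (simp_all add: Var_def mult_single single_add[symmetric] add.commute)

lemma pdiff_zero[simp]: "pdiff i 0 = 0"
  by (simp add: pdiff_def)

lemma pdiff_add: "pdiff i (P + Q) = pdiff i P + pdiff i Q"
  unfolding pdiff_def
  by (rule setsum_keys_plus_distrib) (simp_all add: single_add distrib_left)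

lemma pdiff_single: "pdiff i (Poly_Mapping.single m c) =
   Poly_Mapping.single (m - Poly_Mapping.single i 1) (of_nat (Poly_Mapping.lookup m i) * c)"
  by (cases "c = 0") (simp_all add: pdiff_def)

lemma monom_sub_add:
  assumes "0 < Poly_Mapping.lookup m i"
  shows "(m - Poly_Mapping.single i 1) + c = (m + c) - Poly_Mapping.single i (1::nat)"
  by (rule poly_mapping_eqI) (use assms in \<open>auto simp: lookup_add lookup_minus lookup_single when_def\<close>)

lemma pdiff_mult_mono:
  "pdiff i (Poly_Mapping.single a b * Poly_Mapping.single c d) =
   pdiff i (Poly_Mapping.single a b) * Poly_Mapping.single c d + Poly_Mapping.single a b * pdiff i (Poly_Mapping.single c (d::'a::comm_ring_1))"
proof -
  consider "Poly_Mapping.lookup a i = 0" "Poly_Mapping.lookup c i = 0" | "Poly_Mapping.lookup a i = 0" "Poly_Mapping.lookup c i > 0"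
    | "Poly_Mapping.lookup a i > 0" "Poly_Mapping.lookup c i = 0" | "Poly_Mapping.lookup a i > 0" "Poly_Mapping.lookup c i > 0" by auto
  then show ?thesis
  proof cases
    case 1 then show ?thesis by (simp add: pdiff_single mult_single lookup_add)
  next
    case 2
    have "c - Poly_Mapping.single i 1 + a = c + a - Poly_Mapping.single i 1" using 2(2) by (rule monom_sub_add)
    with 2 show ?thesis
      by (simp add: pdiff_single mult_single lookup_add add.commute[of a] mult_ac)
  next
    case 3
    have "a - Poly_Mapping.single i 1 + c = a + c - Poly_Mapping.single i 1" using 3(1) by (rule monom_sub_add)
    then have h: "c + (a - Poly_Mapping.single i 1) = a + c - Poly_Mapping.single i 1" by (simp add: add.commute)
    from 3 show ?thesis
      by (simp add: pdiff_single mult_single lookup_add h[simplified] mult_ac)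
  next
    case 4
    have "a - Poly_Mapping.single i 1 + c = a + c - Poly_Mapping.single i 1" using 4(1) by (rule monom_sub_add)
    then have h: "c + (a - Poly_Mapping.single i 1) = a + c - Poly_Mapping.single i 1" by (simp add: add.commute)
    have "c - Poly_Mapping.single i 1 + a = c + a - Poly_Mapping.single i 1" using 4(2) by (rule monom_sub_add)
    then have h2: "a + (c - Poly_Mapping.single i 1) = a + c - Poly_Mapping.single i 1" by (simp add: add.commute)
    show ?thesis
      by (simp add: pdiff_single mult_single lookup_add h[simplified] h2[simplified] single_add[symmetric] algebra_simps)
  qed
qed

lemma pdiff_mult: "pdiff i (P * Q) = pdiff i P * Q + P * (pdiff i Q :: 'a::comm_ring_1 mpoly)"
  by (rule mpoly_bilinear_induct[where F="\<lambda>P Q. pdiff i (P * Q)" and G="\<lambda>P Q. pdiff i P * Q + P * pdiff i Q"])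
     (simp_all add: pdiff_add distrib_left distrib_right pdiff_mult_mono algebra_simps)

lemma pdiff_Var: "pdiff i (Var j :: 'a::comm_ring_1 mpoly) = (if i = j then 1 else 0)"
  by (simp add: Var_def pdiff_single lookup_single when_def)

lemma pdiff_const: "pdiff i (Poly_Mapping.single 0 c :: 'a::comm_ring_1 mpoly) = 0"
  by (simp add: pdiff_single)

definition mon :: "(nat \<Rightarrow> 'r::comm_ring_1) \<Rightarrow> (nat \<Rightarrow>\<^sub>0 nat) \<Rightarrow> 'r" where
  "mon v m = (\<Prod>i\<in>Poly_Mapping.keys m. v i ^ Poly_Mapping.lookup m i)"

lemma mon_superset:
  assumes "finite S" "Poly_Mapping.keys m \<subseteq> S"
  shows "mon v m = (\<Prod>i\<in>S. v i ^ Poly_Mapping.lookup m i)"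
  unfolding mon_def using assms
  by (intro prod.mono_neutral_left) (auto simp: in_keys_iff)

lemma mon_add: "mon v (a + b) = mon v a * mon v b"
proof -
  let ?S = "Poly_Mapping.keys a \<union> Poly_Mapping.keys b"
  have "mon v (a + b) = (\<Prod>i\<in>?S. v i ^ Poly_Mapping.lookup (a + b) i)"
    by (rule mon_superset) (auto simp: keys_add)
  also have "\<dots> = (\<Prod>i\<in>?S. v i ^ Poly_Mapping.lookup a i) * (\<Prod>i\<in>?S. v i ^ Poly_Mapping.lookup b i)"
    by (simp add: lookup_add power_add prod.distrib)
  also have "\<dots> = mon v a * mon v b"
  proof -
    have "mon v a = (\<Prod>i\<in>?S. v i ^ Poly_Mapping.lookup a i)" by (rule mon_superset) auto
    moreover have "mon v b = (\<Prod>i\<in>?S. v i ^ Poly_Mapping.lookup b i)" by (rule mon_superset) auto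
    ultimately show ?thesis by simp
  qed
  finally show ?thesis .
qed

lemma mon_zero[simp]: "mon v 0 = 1"
  by (simp add: mon_def)

lemma mon_single: "mon v (Poly_Mapping.single i n) = v i ^ n"
  by (cases "n = 0") (simp_all add: mon_def)

locale mhom =
  fixes phi :: "'a::comm_ring_1 \<Rightarrow> 'r::comm_ring_1"
  assumes phi_add: "phi (x + y) = phi x + phi y"
  and phi_mult: "phi (x * y) = phi x * phi y"
  and phi_one: "phi 1 = 1"
begin

lemma phi_zero[simp]: "phi 0 = 0"
  using phi_add[of 0 0] by simp

lemma mpeval_eq: "mpeval phi v P = (\<Sum>m\<in>Poly_Mapping.keys P. phi (Poly_Mapping.lookup P m) * mon v m)"
  by (simp add: mpeval_def mon_def)

lemma mpeval_add: "mpeval phi v (P + Q) = mpeval phi v P + mpeval phi v Q"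
  unfolding mpeval_eq
  by (rule setsum_keys_plus_distrib) (simp_all add: phi_add distrib_right)

lemma mpeval_zero[simp]: "mpeval phi v 0 = 0"
  by (simp add: mpeval_eq)

lemma mpeval_single: "mpeval phi v (Poly_Mapping.single m c) = phi c * mon v m"
  by (cases "c = 0") (simp_all add: mpeval_eq)

lemma mpeval_mult: "mpeval phi v (P * Q) = mpeval phi v P * mpeval phi v Q"
  by (rule mpoly_bilinear_induct[where F="\<lambda>P Q. mpeval phi v (P * Q)" and G="\<lambda>P Q. mpeval phi v P * mpeval phi v Q"])
     (simp_all add: mpeval_add distrib_left distrib_right mult_single mpeval_single mon_add phi_mult mult_ac)

lemma mpeval_one: "mpeval phi v 1 = 1"
  using mpeval_single[of v 0 1] by (simp add: phi_one)

lemma mpeval_Var: "mpeval phi v (Var i) = v i"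
  by (simp add: Var_def mpeval_single mon_single phi_one)

end

locale rhom =
  fixes h :: "'a::comm_ring_1 \<Rightarrow> 'b::comm_ring_1"
  assumes h_add: "h (x + y) = h x + h y"
  and h_mult: "h (x * y) = h x * h y"
  and h_one: "h 1 = 1"
begin

lemma h_zero[simp]: "h 0 = 0"
  using h_add[of 0 0] by simp
lemma h_minus: "h (- x) = - h x"
  using h_add[of x "-x"] by (simp add: eq_neg_iff_add_eq_0 add.commute)
lemma h_diff: "h (x - y) = h x - h y"
  using h_add[of x "-y"] by (simp add: h_minus)
lemma h_of_nat: "h (of_nat n) = of_nat n"
  by (induction n) (simp_all add: h_add h_one)

definition hm :: "'a mat2 \<Rightarrow> 'b mat2" where
  "hm X = (case X of (a, b, c, d) \<Rightarrow> (h a, h b, h c, h d))"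

lemma hm_tuple: "hm (a, b, c, d) = (h a, h b, h c, h d)"
  by (simp add: hm_def)

lemma hm_mul: "hm (m2mul X Y) = m2mul (hm X) (hm Y)"
  by (cases X; cases Y) (simp add: hm_def h_add h_mult)

lemma hm_tr: "h (m2tr X) = m2tr (hm X)"
  by (cases X) (simp add: hm_def h_add)

lemma hm_Amat: "hm (Amat 1 1 f g a1 a2 t (of_nat k)) = Amat 1 1 (h f) (h g) (h a1) (h a2) (h t) (of_nat k)"
  unfolding Amat_def by (simp only: hm_mul hm_tuple h_one h_zero h_add h_diff h_mult h_minus h_of_nat)

lemma hm_prod: "hm (prodM (Amat 1 1 f g a1 a2 t) n) = prodM (Amat 1 1 (h f) (h g) (h a1) (h a2) (h t)) n"
  by (induction n) (simp_all add: hm_mul hm_Amat m2one_def hm_tuple h_one)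

lemma h_trace: "h (m2tr (prodM (Amat 1 1 f g a1 a2 t) n)) = m2tr (prodM (Amat 1 1 (h f) (h g) (h a1) (h a2) (h t)) n)"
  by (simp add: hm_tr hm_prod)

end

lemma mhom_rhom: "mhom phi \<Longrightarrow> rhom (mpeval phi v)"
  by (unfold_locales) (simp_all add: mhom.mpeval_add mhom.mpeval_mult mhom.mpeval_one)

lemma RF_rhom: "rhom (RF :: 'a::field mpoly \<Rightarrow> 'a mpoly fract)"
  by unfold_locales (simp_all add: RF_def One_fract_def)

lemma Const_RF_mhom: "mhom (\<lambda>c. RF (Const c :: 'a::field mpoly))"
  by unfold_locales (simp_all add: RF_def Const_def One_fract_def single_add mult_single)

lemma pfc_iff: "prime_field_coeffs P \<longleftrightarrow> (\<forall>m. Poly_Mapping.lookup P m \<in> \<int>)"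
  by (simp add: prime_field_coeffs_def Ints_def)

lemma pfc_add: "prime_field_coeffs P \<Longrightarrow> prime_field_coeffs Q \<Longrightarrow> prime_field_coeffs (P + Q)"
  by (simp add: pfc_iff lookup_add)
lemma pfc_uminus: "prime_field_coeffs P \<Longrightarrow> prime_field_coeffs (- P)"
  by (simp add: pfc_iff)
lemma pfc_diff: "prime_field_coeffs P \<Longrightarrow> prime_field_coeffs Q \<Longrightarrow> prime_field_coeffs (P - Q)"
  by (simp add: pfc_iff lookup_minus)
lemma pfc_single: "c \<in> \<int> \<Longrightarrow> prime_field_coeffs (Poly_Mapping.single m c)"
  by (simp add: pfc_iff lookup_single when_def)
lemma pfc_zero: "prime_field_coeffs 0"
  by (simp add: pfc_iff)

lemma pfc_split:
  assumes "a \<notin> Poly_Mapping.keys f" "prime_field_coeffs (Poly_Mapping.single a b + f)"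
  shows "b \<in> \<int>" "prime_field_coeffs f"
proof -
  have "Poly_Mapping.lookup (Poly_Mapping.single a b + f) a \<in> \<int>" using assms(2) by (simp add: pfc_iff)
  then show "b \<in> \<int>" using assms(1) by (simp add: lookup_add in_keys_iff)
  show "prime_field_coeffs f"
    unfolding pfc_iff
  proof
    fix m
    show "Poly_Mapping.lookup f m \<in> \<int>"
    proof (cases "m = a")
      case True then show ?thesis using assms(1) by (simp add: in_keys_iff)
    next
      case False
      have "Poly_Mapping.lookup (Poly_Mapping.single a b + f) m \<in> \<int>" using assms(2) by (simp add: pfc_iff)
      then show ?thesis using False by (simp add: lookup_add lookup_single when_def)
    qed
  qed
qed

lemma pfc_mult_single:
  assumes "b \<in> \<int>" shows "prime_field_coeffs Q \<Longrightarrow> prime_field_coeffs (Poly_Mapping.single a b * Q)"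
proof (induction Q rule: pm_induct)
  case zero then show ?case by (simp add: pfc_zero)
next
  case (add c d g)
  from pfc_split[OF add(1) add(4)] have "d \<in> \<int>" "prime_field_coeffs g" by auto
  then show ?case using add assms
    by (simp add: distrib_left mult_single pfc_add pfc_single)
qed

lemma pfc_mult: "prime_field_coeffs P \<Longrightarrow> prime_field_coeffs Q \<Longrightarrow> prime_field_coeffs (P * Q)"
proof (induction P rule: pm_induct)
  case zero then show ?case by (simp add: pfc_zero)
next
  case (add a b f)
  from pfc_split[OF add(1) add(4)] have "b \<in> \<int>" "prime_field_coeffs f" by auto
  then show ?case using add
    by (simp add: distrib_right pfc_add pfc_mult_single)
qed

lemma pfc_one: "prime_field_coeffs (1 :: 'a::comm_ring_1 mpoly)"
  using pfc_single[of "1::'a" 0] by simp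
lemma pfc_of_nat: "prime_field_coeffs (of_nat n :: 'a::comm_ring_1 mpoly)"
  by (induction n) (simp_all add: pfc_zero pfc_add pfc_one)
lemma pfc_Var: "prime_field_coeffs (Var i :: 'a::comm_ring_1 mpoly)"
  by (simp add: Var_def pfc_single)
lemma pfc_power: "prime_field_coeffs (P :: 'a::comm_ring_1 mpoly) \<Longrightarrow> prime_field_coeffs (P ^ n)"
  by (induction n) (simp_all add: pfc_one pfc_mult)

definition pfcm :: "'a::comm_ring_1 mpoly mat2 \<Rightarrow> bool" where
  "pfcm X = (case X of (a, b, c, d) \<Rightarrow> prime_field_coeffs a \<and> prime_field_coeffs b \<and> prime_field_coeffs c \<and> prime_field_coeffs d)"

lemma pfcm_mul: "pfcm X \<Longrightarrow> pfcm Y \<Longrightarrow> pfcm (m2mul X Y)"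
  by (cases X; cases Y) (simp add: pfcm_def pfc_add pfc_mult)

lemma pfc_trace: "prime_field_coeffs (m2tr (prodM (Amat 1 1 vf vg va1 va2 vt) n) :: 'a::comm_ring_1 mpoly)"
proof -
  have A: "pfcm (Amat 1 1 vf vg va1 va2 vt (of_nat k) :: 'a mpoly mat2)" for k
    unfolding Amat_def
    by (intro pfcm_mul) (simp_all add: pfcm_def pfc_add pfc_mult pfc_diff pfc_uminus pfc_Var pfc_of_nat pfc_one pfc_zero)
  have "pfcm (prodM (Amat 1 1 vf vg va1 va2 vt) n :: 'a mpoly mat2)"
  proof (induction n)
    case 0 then show ?case by (simp add: pfcm_def m2one_def pfc_one pfc_zero)
  next
    case (Suc n) then show ?case unfolding prodM.simps by (rule pfcm_mul[OF A])
  qed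
  then show ?thesis
    by (cases "prodM (Amat 1 1 vf vg va1 va2 vt) n :: 'a mpoly mat2") (simp add: pfcm_def pfc_add)
qed

definition wle :: "((nat \<Rightarrow>\<^sub>0 nat) \<Rightarrow> nat) \<Rightarrow> nat \<Rightarrow> 'a::zero mpoly \<Rightarrow> bool" where
  "wle w d P \<longleftrightarrow> (\<forall>m\<in>Poly_Mapping.keys P. w m \<le> d)"
definition wlt :: "((nat \<Rightarrow>\<^sub>0 nat) \<Rightarrow> nat) \<Rightarrow> nat \<Rightarrow> 'a::zero mpoly \<Rightarrow> bool" where
  "wlt w d P \<longleftrightarrow> (\<forall>m\<in>Poly_Mapping.keys P. w m < d)"
definition weq :: "((nat \<Rightarrow>\<^sub>0 nat) \<Rightarrow> nat) \<Rightarrow> nat \<Rightarrow> 'a::zero mpoly \<Rightarrow> bool" where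
  "weq w d P \<longleftrightarrow> (\<forall>m\<in>Poly_Mapping.keys P. w m = d)"
definition hastop :: "((nat \<Rightarrow>\<^sub>0 nat) \<Rightarrow> nat) \<Rightarrow> nat \<Rightarrow> 'a::comm_ring_1 mpoly \<Rightarrow> 'a mpoly \<Rightarrow> bool" where
  "hastop w d P T \<longleftrightarrow> weq w d T \<and> wlt w d (P - T)"

locale weight =
  fixes w :: "(nat \<Rightarrow>\<^sub>0 nat) \<Rightarrow> nat"
  assumes w_add: "w (a + b) = w a + w b"
begin

lemma w_zero[simp]: "w 0 = 0"
  using w_add[of 0 0] by simp

context
begin

lemma wle_add: "wle w d (P::'a::comm_ring_1 mpoly) \<Longrightarrow> wle w d Q \<Longrightarrow> wle w d (P + Q)"
  unfolding wle_def using keys_add[of P Q] by blast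
lemma wlt_add: "wlt w d (P::'a::comm_ring_1 mpoly) \<Longrightarrow> wlt w d Q \<Longrightarrow> wlt w d (P + Q)"
  unfolding wlt_def using keys_add[of P Q] by blast
lemma weq_add: "weq w d (P::'a::comm_ring_1 mpoly) \<Longrightarrow> weq w d Q \<Longrightarrow> weq w d (P + Q)"
  unfolding weq_def using keys_add[of P Q] by blast
lemma wle_diff: "wle w d (P::'a::comm_ring_1 mpoly) \<Longrightarrow> wle w d Q \<Longrightarrow> wle w d (P - Q)"
  unfolding wle_def using keys_diff[of P Q] by blast
lemma wlt_diff: "wlt w d (P::'a::comm_ring_1 mpoly) \<Longrightarrow> wlt w d Q \<Longrightarrow> wlt w d (P - Q)"
  unfolding wlt_def using keys_diff[of P Q] by blast
lemma weq_diff: "weq w d (P::'a::comm_ring_1 mpoly) \<Longrightarrow> weq w d Q \<Longrightarrow> weq w d (P - Q)"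
  unfolding weq_def using keys_diff[of P Q] by blast
lemma wle_uminus: "wle w d (P::'a::comm_ring_1 mpoly) \<Longrightarrow> wle w d (- P)"
  unfolding wle_def by simp
lemma wlt_uminus: "wlt w d (P::'a::comm_ring_1 mpoly) \<Longrightarrow> wlt w d (- P)"
  unfolding wlt_def by simp
lemma weq_uminus: "weq w d (P::'a::comm_ring_1 mpoly) \<Longrightarrow> weq w d (- P)"
  unfolding weq_def by simp

lemma wle_mult: "wle w a (P::'a::comm_ring_1 mpoly) \<Longrightarrow> wle w b Q \<Longrightarrow> wle w (a + b) (P * Q)"
  unfolding wle_def using keys_mult[of P Q] by (force simp: w_add intro: add_mono)
lemma wlt_mult1: "wlt w a (P::'a::comm_ring_1 mpoly) \<Longrightarrow> wle w b Q \<Longrightarrow> wlt w (a + b) (P * Q)"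
  unfolding wle_def wlt_def using keys_mult[of P Q] by (force simp: w_add intro: add_less_le_mono)
lemma wlt_mult2: "wle w a (P::'a::comm_ring_1 mpoly) \<Longrightarrow> wlt w b Q \<Longrightarrow> wlt w (a + b) (P * Q)"
  unfolding wle_def wlt_def using keys_mult[of P Q] by (force simp: w_add intro: add_le_less_mono)
lemma weq_mult: "weq w a (P::'a::comm_ring_1 mpoly) \<Longrightarrow> weq w b Q \<Longrightarrow> weq w (a + b) (P * Q)"
  unfolding weq_def using keys_mult[of P Q] by (force simp: w_add)

lemma wle_weqI: "weq w a (P::'a::comm_ring_1 mpoly) \<Longrightarrow> a \<le> d \<Longrightarrow> wle w d P"
  unfolding wle_def weq_def by auto
lemma wlt_weqI: "weq w a (P::'a::comm_ring_1 mpoly) \<Longrightarrow> a < d \<Longrightarrow> wlt w d P"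
  unfolding wlt_def weq_def by auto
lemma wlt_wleI: "wle w a (P::'a::comm_ring_1 mpoly) \<Longrightarrow> a < d \<Longrightarrow> wlt w d P"
  unfolding wlt_def wle_def by auto
lemma wle_wltI: "wlt w d (P::'a::comm_ring_1 mpoly) \<Longrightarrow> wle w d P"
  unfolding wlt_def wle_def by auto
lemma wle_mono: "wle w a (P::'a::comm_ring_1 mpoly) \<Longrightarrow> a \<le> d \<Longrightarrow> wle w d P"
  unfolding wle_def by auto
lemma weq_cong: "weq w a (P::'a::comm_ring_1 mpoly) \<Longrightarrow> a = d \<Longrightarrow> weq w d P"
  by simp

end

lemma weq_Var: "weq w (w (Poly_Mapping.single i 1)) (Var i :: 'a::comm_ring_1 mpoly)"
  by (simp add: weq_def Var_def)
lemma weq_const: "weq w 0 (Poly_Mapping.single 0 c :: 'a::comm_ring_1 mpoly)"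
  by (simp add: weq_def)
lemma weq_of_nat: "weq w 0 (of_nat n :: 'a::comm_ring_1 mpoly)"
  using weq_const[of "of_nat n :: 'a"] by simp
lemma weq_one: "weq w 0 (1 :: 'a::comm_ring_1 mpoly)"
  using weq_of_nat[of 1] by simp
lemma weq_numeral: "weq w 0 (numeral n :: 'a::comm_ring_1 mpoly)"
  using weq_of_nat[of "numeral n"] by simp
lemma weq_power: "weq w a (P :: 'a::comm_ring_1 mpoly) \<Longrightarrow> weq w (n * a) (P ^ n)"
  by (induction n) (simp_all add: weq_one weq_mult)

lemmas w_intros = wle_add wle_diff wle_uminus wlt_add wlt_diff wlt_uminus weq_add weq_diff weq_uminus
lemmas weq_intros = weq_uminus weq_mult weq_Var weq_of_nat weq_power weq_one weq_numeral

context
begin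

lemma hastop_intro: "P = R + T \<Longrightarrow> wlt w d R \<Longrightarrow> weq w d T \<Longrightarrow> hastop w d (P::'a::comm_ring_1 mpoly) T"
  by (simp add: hastop_def)

lemma hastop_wle: "hastop w d (P::'a::comm_ring_1 mpoly) T \<Longrightarrow> wle w d P"
proof -
  assume h: "hastop w d P T"
  have "P = (P - T) + T" by simp
  moreover have "wle w d (P - T)" "wle w d T" using h by (auto simp: hastop_def intro: wle_wltI wle_weqI)
  ultimately show ?thesis by (metis wle_add)
qed

lemma hastop_add: "hastop w d (P::'a::comm_ring_1 mpoly) U1 \<Longrightarrow> hastop w d Q U2 \<Longrightarrow> hastop w d (P + Q) (U1 + U2)"
proof -
  assume h: "hastop w d P U1" "hastop w d Q U2"
  have e: "P + Q - (U1 + U2) = (P - U1) + (Q - U2)" by simp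
  from h show ?thesis unfolding hastop_def e by (auto intro: weq_add wlt_add)
qed

lemma hastop_diff: "hastop w d (P::'a::comm_ring_1 mpoly) U1 \<Longrightarrow> hastop w d Q U2 \<Longrightarrow> hastop w d (P - Q) (U1 - U2)"
proof -
  assume h: "hastop w d P U1" "hastop w d Q U2"
  have e: "P - Q - (U1 - U2) = (P - U1) - (Q - U2)" by simp
  from h show ?thesis unfolding hastop_def e by (auto intro: weq_diff wlt_diff)
qed

lemma hastop_uminus: "hastop w d (P::'a::comm_ring_1 mpoly) T \<Longrightarrow> hastop w d (- P) (- T)"
proof -
  assume h: "hastop w d P T"
  have e: "- P - (- T) = - (P - T)" by simp
  from h have a: "weq w d (-T)" by (simp add: hastop_def weq_uminus)
  from h have b: "wlt w d (- (P - T))" unfolding hastop_def by (blast intro: wlt_uminus)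
  show ?thesis unfolding hastop_def e using a b by blast
qed

lemma hastop_zeroI: "wlt w d (P::'a::comm_ring_1 mpoly) \<Longrightarrow> hastop w d P 0"
  by (simp add: hastop_def weq_def)

lemma hastop_zeroD: "hastop w d (P::'a::comm_ring_1 mpoly) 0 \<Longrightarrow> wlt w d P"
  by (simp add: hastop_def)

lemma hastop_self: "weq w d (T::'a::comm_ring_1 mpoly) \<Longrightarrow> hastop w d T T"
  by (simp add: hastop_def wlt_def)

lemma hastop_mult: "hastop w a (P::'a::comm_ring_1 mpoly) U1 \<Longrightarrow> hastop w b Q U2 \<Longrightarrow> hastop w (a + b) (P * Q) (U1 * U2)"
proof -
  assume h1: "hastop w a P U1" and h2: "hastop w b Q U2"
  have e: "P * Q - U1 * U2 = (P - U1) * Q + U1 * (Q - U2)" by (simp add: algebra_simps)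
  have "wlt w (a + b) ((P - U1) * Q)"
    using h1 hastop_wle[OF h2] by (intro wlt_mult1) (auto simp: hastop_def)
  moreover have "wlt w (a + b) (U1 * (Q - U2))"
    using h1 h2 by (intro wlt_mult2) (auto simp: hastop_def intro: wle_weqI)
  ultimately show ?thesis using h1 h2 by (simp add: hastop_def e wlt_add weq_mult)
qed

lemma hastop_Max:
  assumes "hastop w d (P::'a::comm_ring_1 mpoly) T" "T \<noteq> 0"
  shows "Max (insert 0 (w ` Poly_Mapping.keys P)) = d"
proof -
  obtain m where m: "m \<in> Poly_Mapping.keys T" using assms(2) by (metis ex_in_conv keys_eq_empty)
  then have wm: "w m = d" using assms(1) by (auto simp: hastop_def weq_def)
  then have "m \<notin> Poly_Mapping.keys (P - T)" using assms(1) by (auto simp: hastop_def wlt_def)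
  then have "Poly_Mapping.lookup P m = Poly_Mapping.lookup T m" by (simp add: in_keys_iff lookup_minus)
  then have "m \<in> Poly_Mapping.keys P" using m by (simp add: in_keys_iff)
  moreover have "\<forall>m'\<in>Poly_Mapping.keys P. w m' \<le> d" using hastop_wle[OF assms(1)] by (simp add: wle_def)
  ultimately show ?thesis using wm
    by (intro Max_eqI) auto
qed

lemma wlt_Max:
  assumes "wlt w d (P::'a::comm_ring_1 mpoly)" "0 < d"
  shows "Max (insert 0 (w ` Poly_Mapping.keys P)) < d"
  using assms by (simp add: wlt_def)

end

end

context weight begin

lemma mat_inv:
  fixes X :: "'a::comm_ring_1 mpoly \<Rightarrow> 'a mpoly mat2"
  assumes X: "\<And>k. \<exists>x11 x12 x21 x22. X (of_nat k) = (x11,x12,x21,x22) \<and> hastop w c x11 T \<and> wlt w c x12 \<and> wle w c x21 \<and> wlt w c x22"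
  shows "\<exists>p11 p12 p21 p22. prodM X n = (p11,p12,p21,p22) \<and> hastop w (c*n) p11 (T^n) \<and> wlt w (c*n) p12
           \<and> wle w (c*n) p21 \<and> wle w (c*n) p22 \<and> (n > 0 \<longrightarrow> wlt w (c*n) p22)"
proof (induction n)
  case 0
  have "hastop w 0 (1::'a mpoly) 1" by (rule hastop_self, rule weq_one)
  moreover have "wlt w 0 (0::'a mpoly)" "wle w 0 (0::'a mpoly)" by (simp_all add: wlt_def wle_def)
  moreover have "wle w 0 (1::'a mpoly)" by (rule wle_weqI[OF weq_one]) simp
  ultimately show ?case by (simp add: m2one_def)
next
  case (Suc n)
  from Suc obtain p11 p12 p21 p22 where P: "prodM X n = (p11,p12,p21,p22)" and
    p: "hastop w (c*n) p11 (T^n)" "wlt w (c*n) p12" "wle w (c*n) p21" "wle w (c*n) p22" "n > 0 \<longrightarrow> wlt w (c*n) p22"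
    by blast
  from X[of n] obtain x11 x12 x21 x22 where XX: "X (of_nat n) = (x11,x12,x21,x22)" and
    x: "hastop w c x11 T" "wlt w c x12" "wle w c x21" "wlt w c x22" by blast
  have cs: "c * Suc n = c + c * n" by simp
  have e: "prodM X (Suc n) = (x11*p11 + x12*p21, x11*p12 + x12*p22, x21*p11 + x22*p21, x21*p12 + x22*p22)"
    by (simp add: P XX)
  have 1: "hastop w (c + c*n) (x11*p11 + x12*p21) (T * T^n + 0)"
    by (intro hastop_add hastop_mult x p hastop_zeroI wlt_mult1)
  have 2: "wlt w (c + c*n) (x11*p12 + x12*p22)"
    by (intro wlt_add wlt_mult2 wlt_mult1 hastop_wle[OF x(1)] x p)
  have 3: "wle w (c + c*n) (x21*p11 + x22*p21)"
    by (intro wle_add wle_mult hastop_wle[OF p(1)] wle_wltI[OF x(4)] x p)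
  have 4: "wlt w (c + c*n) (x21*p12 + x22*p22)"
    by (intro wlt_add wlt_mult2 wlt_mult1 x p)
  show ?case unfolding e cs using 1 2 3 4 by (simp add: wle_wltI)
qed

lemma trace_top:
  fixes X :: "'a::comm_ring_1 mpoly \<Rightarrow> 'a mpoly mat2"
  assumes X: "\<And>k. \<exists>x11 x12 x21 x22. X (of_nat k) = (x11,x12,x21,x22) \<and> hastop w c x11 T \<and> wlt w c x12 \<and> wle w c x21 \<and> wlt w c x22"
  and "n > 0"
  shows "hastop w (c*n) (m2tr (prodM X n)) (T^n)"
proof -
  from mat_inv[where X=X and c=c and T=T and n=n, OF X] obtain p11 p12 p21 p22 where P: "prodM X n = (p11,p12,p21,p22)" and
    p: "hastop w (c*n) p11 (T^n)" "wlt w (c*n) p22" using assms(2) by blast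
  have "hastop w (c*n) (p11 + p22) (T^n + 0)"
    by (intro hastop_add p hastop_zeroI)
  then show ?thesis by (simp add: P)
qed

end

definition wt :: "(nat \<Rightarrow>\<^sub>0 nat) \<Rightarrow> nat" where
  "wt m = (\<Sum>i\<in>Poly_Mapping.keys m. Poly_Mapping.lookup m i)"

lemma wt_superset: "finite S \<Longrightarrow> Poly_Mapping.keys m \<subseteq> S \<Longrightarrow> wt m = (\<Sum>i\<in>S. Poly_Mapping.lookup m i)"
  unfolding wt_def by (intro sum.mono_neutral_left) (auto simp: in_keys_iff)

interpretation wtw: weight wt
proof
  fix a b :: "nat \<Rightarrow>\<^sub>0 nat"
  let ?S = "Poly_Mapping.keys a \<union> Poly_Mapping.keys b"
  have "wt (a + b) = (\<Sum>i\<in>?S. Poly_Mapping.lookup (a + b) i)" by (rule wt_superset) (auto simp: keys_add)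
  moreover have "wt a = (\<Sum>i\<in>?S. Poly_Mapping.lookup a i)" by (rule wt_superset) auto
  moreover have "wt b = (\<Sum>i\<in>?S. Poly_Mapping.lookup b i)" by (rule wt_superset) auto
  ultimately show "wt (a + b) = wt a + wt b" by (simp add: lookup_add sum.distrib)
qed

lemma wt_single[simp]: "wt (Poly_Mapping.single i n) = n"
  by (cases "n = 0") (simp_all add: wt_def)

definition wv :: "nat \<Rightarrow> (nat \<Rightarrow>\<^sub>0 nat) \<Rightarrow> nat" where
  "wv j m = Poly_Mapping.lookup m j"

interpretation wvw: weight "wv j"
  by unfold_locales (simp add: wv_def lookup_add)

lemma wv_single[simp]: "wv j (Poly_Mapping.single i n) = (if i = j then n else 0)"
  by (simp add: wv_def lookup_single when_def)

lemma ent_total: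
  "\<exists>x11 x12 x21 x22. Ap vf vg va1 va2 vt (of_nat k :: 'a::comm_ring_1 mpoly) = (x11,x12,x21,x22)
     \<and> hastop wt 3 x11 (-(vf*vg*vt) + vf*vg^2 - vf^2*vg) \<and> wlt wt 3 x12 \<and> wle wt 3 x21 \<and> wlt wt 3 x22"
  unfolding Ap_explicit
  apply (rule exI)+
  apply (rule conjI, rule refl)
  apply (intro conjI)
     apply (rule wtw.hastop_intro[where R="vt*of_nat k - vg*va1 + vf*of_nat k"])
       apply (simp add: algebra_simps)
      apply ((intro wtw.w_intros)?; (rule wtw.wlt_weqI, (rule wtw.weq_intros)+; simp))
     apply ((intro wtw.w_intros)?; (rule wtw.weq_cong, (rule wtw.weq_intros)+; simp))
    apply ((intro wtw.w_intros)?; (rule wtw.wlt_weqI, (rule wtw.weq_intros)+; simp))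
   apply ((intro wtw.w_intros)?; (rule wtw.wle_weqI, (rule wtw.weq_intros)+; simp))
  apply ((intro wtw.w_intros)?; (rule wtw.wlt_weqI, (rule wtw.weq_intros)+; simp))
  done

lemma ent_f:
  "\<exists>x11 x12 x21 x22. Ap vf vg va1 va2 vt (of_nat k :: 'a::comm_ring_1 mpoly) = (x11,x12,x21,x22)
     \<and> hastop (wv 0) 2 x11 (-(vf^2*vg)) \<and> wlt (wv 0) 2 x12 \<and> wle (wv 0) 2 x21 \<and> wlt (wv 0) 2 x22"
  unfolding Ap_explicit
  apply (rule exI)+
  apply (rule conjI, rule refl)
  apply (intro conjI)
     apply (rule wvw.hastop_intro[where R="vt*of_nat k - vg*va1 + vf*of_nat k - vf*vg*vt + vf*vg^2"])
       apply (simp add: algebra_simps)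
      apply ((intro wvw.w_intros)?; (rule wvw.wlt_weqI, (rule wvw.weq_intros)+; simp))
     apply ((intro wvw.w_intros)?; (rule wvw.weq_cong, (rule wvw.weq_intros)+; simp))
    apply ((intro wvw.w_intros)?; (rule wvw.wlt_weqI, (rule wvw.weq_intros)+; simp))
   apply ((intro wvw.w_intros)?; (rule wvw.wle_weqI, (rule wvw.weq_intros)+; simp))
  apply ((intro wvw.w_intros)?; (rule wvw.wlt_weqI, (rule wvw.weq_intros)+; simp))
  done

lemma ent_g:
  "\<exists>x11 x12 x21 x22. Ap vf vg va1 va2 vt (of_nat k :: 'a::comm_ring_1 mpoly) = (x11,x12,x21,x22)
     \<and> hastop (wv 1) 2 x11 (vf*vg^2) \<and> wlt (wv 1) 2 x12 \<and> wle (wv 1) 2 x21 \<and> wlt (wv 1) 2 x22"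
  unfolding Ap_explicit
  apply (rule exI)+
  apply (rule conjI, rule refl)
  apply (intro conjI)
     apply (rule wvw.hastop_intro[where R="vt*of_nat k - vg*va1 + vf*of_nat k - vf*vg*vt - vf^2*vg"])
       apply (simp add: algebra_simps)
      apply ((intro wvw.w_intros)?; (rule wvw.wlt_weqI, (rule wvw.weq_intros)+; simp))
     apply ((intro wvw.w_intros)?; (rule wvw.weq_cong, (rule wvw.weq_intros)+; simp))
    apply ((intro wvw.w_intros)?; (rule wvw.wlt_weqI, (rule wvw.weq_intros)+; simp))
   apply ((intro wvw.w_intros)?; (rule wvw.wle_weqI, (rule wvw.weq_intros)+; simp))
  apply ((intro wvw.w_intros)?; (rule wvw.wlt_weqI, (rule wvw.weq_intros)+; simp))
  done

lemma (in rhom) h_power: "h (x ^ n) = h x ^ n"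
  by (induction n) (simp_all add: h_one h_mult)

lemma id_mhom: "mhom (id :: 'a::comm_ring_1 \<Rightarrow> 'a)"
  by unfold_locales simp_all

lemma ev_rhom: "rhom (mpeval (id :: 'a::comm_ring_1 \<Rightarrow> 'a) v)"
  by (rule mhom_rhom[OF id_mhom])

lemma ev_Var: "mpeval (id :: 'a::comm_ring_1 \<Rightarrow> 'a) v (Var i) = v i"
  by (rule mhom.mpeval_Var[OF id_mhom])

lemma nz_by_eval: "mpeval (id :: 'a::comm_ring_1 \<Rightarrow> 'a) v P \<noteq> 0 \<Longrightarrow> P \<noteq> 0"
  using mhom.mpeval_zero[OF id_mhom] by auto

lemmas ev_simps = rhom.h_add[OF ev_rhom] rhom.h_mult[OF ev_rhom] rhom.h_diff[OF ev_rhom]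
  rhom.h_minus[OF ev_rhom] rhom.h_one[OF ev_rhom] rhom.h_power[OF ev_rhom] ev_Var

lemma RF_nz: "P \<noteq> 0 \<Longrightarrow> RF (P :: 'a::field mpoly) \<noteq> 0"
  by (simp add: RF_def Zero_fract_def eq_fract)

lemmas RF_simps = rhom.h_add[OF RF_rhom] rhom.h_mult[OF RF_rhom] rhom.h_diff[OF RF_rhom]
  rhom.h_minus[OF RF_rhom] rhom.h_one[OF RF_rhom]

lemma Dt_deriv: "deriv (Dt :: 'a::comm_ring_1 mpoly \<Rightarrow> 'a mpoly)"
  by unfold_locales (simp_all add: Dt_def pdiff_add pdiff_mult algebra_simps)

lemma Dt_Var: "Dt (Var i :: 'a::comm_ring_1 mpoly) =
   (if i = 0 then vf * (2 * vg - vf - vt) - va1 else if i = 1 then vg * (2 * vf - vg + vt) + va2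
    else if i = 4 then 1 else 0)"
  by (simp add: Dt_def pdiff_Var)

lemma tdeg_wt: "tdeg P = Max (insert 0 (wt ` Poly_Mapping.keys P))"
  by (simp add: tdeg_def wt_def[abs_def])

lemma vdeg_wv: "vdeg i P = Max (insert 0 (wv i ` Poly_Mapping.keys P))"
  by (simp add: vdeg_def wv_def[abs_def])

theorem theorem2p2:
  fixes p :: nat
  assumes "prime p"
    and "CHAR('k::field) = p"
  shows "prime_field_coeffs (Ip p :: 'k mpoly)
    \<and> T1 (Ip p :: 'k mpoly) = RF (Ip p)
    \<and> T2 (Ip p :: 'k mpoly) = RF (Ip p)
    \<and> Dt (Ip p :: 'k mpoly) = 0
    \<and> tdeg (Ip p :: 'k mpoly) = 3 * p
    \<and> vdeg 0 (Ip p :: 'k mpoly) = 2 * p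
    \<and> vdeg 1 (Ip p :: 'k mpoly) = 2 * p
    \<and> (\<exists>Q :: 'k mpoly. prime_field_coeffs Q \<and> vdeg 0 Q < 2 * p \<and> vdeg 1 Q < 2 * p
         \<and> Ip p = - (vf ^ (2 * p) * vg ^ p) + vf ^ p * vg ^ (2 * p) + Q)"
proof -
  have p0: "p > 0" using assms(1) prime_gt_0_nat by blast
  have ck: "of_nat p = (0::'k)" using assms(2) of_nat_CHAR by metis
  have cm: "of_nat p = (0::'k mpoly)" by (metis ck single_of_nat single_zero)
  have cf: "of_nat p = (0::'k mpoly fract)"
  proof -
    have "RF (of_nat p :: 'k mpoly) = of_nat p" by (rule rhom.h_of_nat[OF RF_rhom])
    then show ?thesis using cm rhom.h_zero[OF RF_rhom] by metis
  qed
  have Ip1: "(Ip p :: 'k mpoly) = m2tr (prodM (Amat 1 1 vf vg va1 va2 vt) p)"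
    by (simp add: Ip_def prodA_prodM)
  have Ip2: "(Ip p :: 'k mpoly) = m2tr (prodM (Ap vf vg va1 va2 vt) p)"
    unfolding Ip1 by (rule rot_tr[OF cm])

  have pfcI: "prime_field_coeffs (Ip p :: 'k mpoly)"
    unfolding Ip1 by (rule pfc_trace)

  define F where "F = RF (vf :: 'k mpoly)"
  define G where "G = RF (vg :: 'k mpoly)"
  define A1 where "A1 = RF (va1 :: 'k mpoly)"
  define A2 where "A2 = RF (va2 :: 'k mpoly)"
  define Tt where "Tt = RF (vt :: 'k mpoly)"
  have RFI: "RF (Ip p :: 'k mpoly) = m2tr (prodM (Amat 1 1 F G A1 A2 Tt) p)"
    unfolding Ip1 F_def G_def A1_def A2_def Tt_def by (rule rhom.h_trace[OF RF_rhom])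
  have RFI2: "RF (Ip p :: 'k mpoly) = m2tr (prodM (Ap F G A1 A2 Tt) p)"
    unfolding RFI by (rule rot_tr[OF cf])
  have nzF: "F \<noteq> 0" unfolding F_def
    by (rule RF_nz, rule nz_by_eval[where v="\<lambda>_. 1"]) (simp add: ev_simps)
  have nzG: "G \<noteq> 0" unfolding G_def
    by (rule RF_nz, rule nz_by_eval[where v="\<lambda>_. 1"]) (simp add: ev_simps)
  have nzA2: "A2 \<noteq> 0" unfolding A2_def
    by (rule RF_nz, rule nz_by_eval[where v="\<lambda>_. 1"]) (simp add: ev_simps)
  have nzA21: "A2 - 1 \<noteq> 0"
  proof -
    have "RF (va2 - 1 :: 'k mpoly) \<noteq> 0"
      by (rule RF_nz, rule nz_by_eval[where v="\<lambda>_. 0"]) (simp add: ev_simps)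
    then show ?thesis by (simp add: A2_def RF_simps)
  qed
  have nzE1: "A1 - F * G \<noteq> 0"
  proof -
    have "RF (va1 - vf * vg :: 'k mpoly) \<noteq> 0"
      by (rule RF_nz, rule nz_by_eval[where v="\<lambda>i. if i = 2 then 1 else 0"]) (simp add: ev_simps)
    then show ?thesis by (simp add: A1_def F_def G_def RF_simps)
  qed
  have nzE2: "A2 + F * G \<noteq> 0"
  proof -
    have "RF (va2 + vf * vg :: 'k mpoly) \<noteq> 0"
      by (rule RF_nz, rule nz_by_eval[where v="\<lambda>i. if i = 3 then 1 else 0"]) (simp add: ev_simps)
    then show ?thesis by (simp add: A2_def F_def G_def RF_simps)
  qed

  have i1: "inverse (A1 - F * G) * (A1 - F * G) = 1" using nzE1 by simp
  have i2: "inverse F * F = 1" using nzF by simp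
  have i3: "inverse (A2 + F * G) * (A2 + F * G) = 1" using nzE2 by simp
  have i4: "inverse G * G = 1" using nzG by simp
  have fb1: "fbar1 = (A1 + A2) * F / (A1 - F * G) - F + G - Tt - A1 / F"
    by (simp add: fbar1_def Let_def F_def G_def A1_def A2_def Tt_def)
  have gb1: "gbar1 = (A2 + F * G) * F / (A1 - F * G)"
    by (simp add: gbar1_def Let_def F_def G_def A1_def A2_def Tt_def)
  have T1I: "T1 (Ip p :: 'k mpoly) = m2tr (prodM (Amat 1 1 fbar1 gbar1 (A1 + 1) A2 Tt) p)"
    unfolding T1_def Ip1
    by (simp add: rhom.h_trace[OF mhom_rhom[OF Const_RF_mhom]] mhom.mpeval_Var[OF Const_RF_mhom] A1_def A2_def Tt_def)
  have T1eq: "T1 (Ip p :: 'k mpoly) = RF (Ip p)"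
  proof -
    define R where "R = (\<lambda>z. m2mul (gbar1, 1, z + A2 - 1, 0) (F - fbar1 + gbar1, 1, z - 1, 0))"
    have lax: "m2mul (Ap fbar1 gbar1 (A1 + 1) A2 Tt z) (R z) = m2mul (R (z + 1)) (Ap F G A1 A2 Tt (z - 1))" for z
      unfolding R_def
      by (rule lax_T1_gen[where di="inverse (A1 - F * G)" and fi="inverse F"])
         (simp_all only: i1 i2 fb1 gb1 divide_inverse)
    have tel: "m2mul (prodM (Ap fbar1 gbar1 (A1 + 1) A2 Tt) p) (R 0) = m2mul (R 0) (prodM (\<lambda>z. Ap F G A1 A2 Tt (z - 1)) p)"
      using telescope[of "Ap fbar1 gbar1 (A1 + 1) A2 Tt" R "\<lambda>z. Ap F G A1 A2 Tt (z - 1)" p] lax cf by simp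
    have det: "fst (R 0) * snd (snd (snd (R 0))) - fst (snd (R 0)) * fst (snd (snd (R 0))) = 1 - A2"
      by (simp add: R_def algebra_simps)
    have "T1 (Ip p :: 'k mpoly) = m2tr (prodM (Ap fbar1 gbar1 (A1 + 1) A2 Tt) p)"
      unfolding T1I by (rule rot_tr[OF cf])
    also have "\<dots> = m2tr (prodM (\<lambda>z. Ap F G A1 A2 Tt (z - 1)) p)"
      by (rule tr_conj_field[OF tel]) (use nzA21 det in simp)
    also have "\<dots> = m2tr (prodM (Ap F G A1 A2 Tt) p)"
      by (rule tr_shift[OF cf p0])
    also have "\<dots> = RF (Ip p)" by (rule RFI2[symmetric])
    finally show ?thesis .
  qed

  have fb2: "fbar2 = (A1 - F * G) * G / (A2 + F * G)"
    by (simp add: fbar2_def Let_def F_def G_def A1_def A2_def Tt_def)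
  have gb2: "gbar2 = (A1 + A2) * G / (A2 + F * G) + F - G + Tt + A2 / G"
    by (simp add: gbar2_def Let_def F_def G_def A1_def A2_def Tt_def)
  have T2I: "T2 (Ip p :: 'k mpoly) = m2tr (prodM (Amat 1 1 fbar2 gbar2 A1 (A2 + 1) Tt) p)"
    unfolding T2_def Ip1
    by (simp add: rhom.h_trace[OF mhom_rhom[OF Const_RF_mhom]] mhom.mpeval_Var[OF Const_RF_mhom] A1_def A2_def Tt_def)
  have T2eq: "T2 (Ip p :: 'k mpoly) = RF (Ip p)"
  proof -
    define R where "R = (\<lambda>z. (F + fbar2 + Tt, 1::'k mpoly fract, z + A2, 0::'k mpoly fract))"
    have r1: "fbar2 * (A2 + F * G) = (A1 - F * G) * G"
      using nzE2 by (simp add: fb2)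
    have r2: "gbar2 * G * (A2 + F * G) = (A1 + A2) * G * G + (F - G + Tt) * G * (A2 + F * G) + A2 * (A2 + F * G)"
    proof -
      have e1: "(A1 + A2) * G / (A2 + F * G) * G * (A2 + F * G) = (A1 + A2) * G * G" using nzE2 by simp
      have e2: "A2 / G * G * (A2 + F * G) = A2 * (A2 + F * G)" using nzG by simp
      have gen: "\<And>X Y. (X + F - G + Tt + Y) * G * (A2 + F * G) = X * G * (A2 + F * G) + (F - G + Tt) * G * (A2 + F * G) + Y * G * (A2 + F * G)"
        by (simp add: algebra_simps)
      show ?thesis unfolding gb2 gen e1 e2 by (rule refl)
    qed
    have lax: "m2mul (Ap fbar2 gbar2 A1 (A2 + 1) Tt z) (R z) = m2mul (R (z + 1)) (Ap F G A1 A2 Tt z)" for z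
      unfolding R_def
      by (rule lax_T2_gen[where di="inverse (A2 + F * G)" and gi="inverse G"])
         (simp_all only: i3 i4 r1 r2)
    have tel: "m2mul (prodM (Ap fbar2 gbar2 A1 (A2 + 1) Tt) p) (R 0) = m2mul (R 0) (prodM (Ap F G A1 A2 Tt) p)"
      using telescope[of "Ap fbar2 gbar2 A1 (A2 + 1) Tt" R "Ap F G A1 A2 Tt" p] lax cf by simp
    have det: "fst (R 0) * snd (snd (snd (R 0))) - fst (snd (R 0)) * fst (snd (snd (R 0))) = - A2"
      by (simp add: R_def)
    have "T2 (Ip p :: 'k mpoly) = m2tr (prodM (Ap fbar2 gbar2 A1 (A2 + 1) Tt) p)"
      unfolding T2I by (rule rot_tr[OF cf])
    also have "\<dots> = m2tr (prodM (Ap F G A1 A2 Tt) p)"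
      by (rule tr_conj_field[OF tel]) (use nzA2 det in simp)
    also have "\<dots> = RF (Ip p)" by (rule RFI2[symmetric])
    finally show ?thesis .
  qed

  have Dteq: "Dt (Ip p :: 'k mpoly) = 0"
    unfolding Ip2
    by (rule deriv.Dt_trace_zero[OF Dt_deriv]) (simp_all add: Dt_Var cm)

  have sum_top: "hastop wt (3 * p) (Ip p :: 'k mpoly) ((-(vf*vg*vt) + vf*vg^2 - vf^2*vg) ^ p)"
    unfolding Ip2 by (rule wtw.trace_top[where X="Ap vf vg va1 va2 vt" and c=3, OF ent_total p0])
  have nz3: "((-(vf*vg*vt) + vf*vg^2 - vf^2*vg) ^ p :: 'k mpoly) \<noteq> 0"
    by (rule nz_by_eval[where v="\<lambda>_. 1"]) (simp add: ev_simps)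
  have tdegI: "tdeg (Ip p :: 'k mpoly) = 3 * p"
    unfolding tdeg_wt by (rule wtw.hastop_Max[OF sum_top nz3])

  have negp: "(- x) ^ p = - (x ^ p)" for x :: "'k mpoly"
  proof (cases "p = 2")
    case True
    have "(2::'k mpoly) = 0" using cm True by simp
    then have "x ^ 2 + x ^ 2 = 0" by (metis mult_2 mult_zero_left)
    then show ?thesis using True by (simp add: eq_neg_iff_add_eq_0)
  next
    case False
    then have "p > 2" using assms(1) prime_ge_2_nat[of p] by linarith
    then have "odd p" using assms(1) prime_odd_nat by blast
    then show ?thesis by simp
  qed
  have f_top: "hastop (wv 0) (2 * p) (Ip p :: 'k mpoly) (- (vf ^ (2 * p) * vg ^ p))"
  proof -
    have "hastop (wv 0) (2 * p) (Ip p :: 'k mpoly) ((-(vf^2*vg)) ^ p)"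
      unfolding Ip2 by (rule wvw.trace_top[where X="Ap vf vg va1 va2 vt" and c=2, OF ent_f p0])
    moreover have "((-(vf^2*vg)) ^ p :: 'k mpoly) = - (vf ^ (2 * p) * vg ^ p)"
      by (simp add: negp power_mult_distrib power_mult)
    ultimately show ?thesis by simp
  qed
  have g_top: "hastop (wv 1) (2 * p) (Ip p :: 'k mpoly) (vf ^ p * vg ^ (2 * p))"
  proof -
    have "hastop (wv 1) (2 * p) (Ip p :: 'k mpoly) ((vf*vg^2) ^ p)"
      unfolding Ip2 by (rule wvw.trace_top[where X="Ap vf vg va1 va2 vt" and c=2, OF ent_g p0])
    moreover have "((vf*vg^2) ^ p :: 'k mpoly) = vf ^ p * vg ^ (2 * p)"
      by (simp add: power_mult_distrib power_mult[symmetric] mult.commute)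
    ultimately show ?thesis by simp
  qed
  have nzf: "(- (vf ^ (2 * p) * vg ^ p) :: 'k mpoly) \<noteq> 0"
    by (rule nz_by_eval[where v="\<lambda>_. 1"]) (simp add: ev_simps)
  have nzg: "(vf ^ p * vg ^ (2 * p) :: 'k mpoly) \<noteq> 0"
    by (rule nz_by_eval[where v="\<lambda>_. 1"]) (simp add: ev_simps)
  have vdeg0: "vdeg 0 (Ip p :: 'k mpoly) = 2 * p"
    unfolding vdeg_wv by (rule wvw.hastop_Max[OF f_top nzf])
  have vdeg1: "vdeg 1 (Ip p :: 'k mpoly) = 2 * p"
    unfolding vdeg_wv by (rule wvw.hastop_Max[OF g_top nzg])

  define Q where "Q = (Ip p :: 'k mpoly) + vf ^ (2 * p) * vg ^ p - vf ^ p * vg ^ (2 * p)"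
  have weqF0: "weq (wv 0) (2 * p) (vf ^ (2 * p) * vg ^ p :: 'k mpoly)"
    by (rule wvw.weq_cong, (rule wvw.weq_intros)+) simp
  have weqG0: "weq (wv 0) p (vf ^ p * vg ^ (2 * p) :: 'k mpoly)"
    by (rule wvw.weq_cong, (rule wvw.weq_intros)+) simp
  have weqF1: "weq (wv 1) p (vf ^ (2 * p) * vg ^ p :: 'k mpoly)"
    by (rule wvw.weq_cong, (rule wvw.weq_intros)+) simp
  have weqG1: "weq (wv 1) (2 * p) (vf ^ p * vg ^ (2 * p) :: 'k mpoly)"
    by (rule wvw.weq_cong, (rule wvw.weq_intros)+) simp
  have Q0: "vdeg 0 Q < 2 * p"
  proof -
    have "hastop (wv 0) (2 * p) Q (- (vf ^ (2 * p) * vg ^ p) + vf ^ (2 * p) * vg ^ p - 0)"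
      unfolding Q_def
      by (intro wvw.hastop_diff wvw.hastop_add f_top wvw.hastop_self weqF0 wvw.hastop_zeroI
          wvw.wlt_weqI[OF weqG0]) (use p0 in simp)
    then have "wlt (wv 0) (2 * p) Q" by (simp add: wvw.hastop_zeroD)
    then show ?thesis unfolding vdeg_wv by (rule wvw.wlt_Max) (use p0 in simp)
  qed
  have Q1: "vdeg 1 Q < 2 * p"
  proof -
    have "hastop (wv 1) (2 * p) Q (vf ^ p * vg ^ (2 * p) + 0 - vf ^ p * vg ^ (2 * p))"
      unfolding Q_def
      by (intro wvw.hastop_diff wvw.hastop_add g_top wvw.hastop_self weqG1 wvw.hastop_zeroI
          wvw.wlt_weqI[OF weqF1]) (use p0 in simp)
    then have "wlt (wv 1) (2 * p) Q" by (simp add: wvw.hastop_zeroD)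
    then show ?thesis unfolding vdeg_wv by (rule wvw.wlt_Max) (use p0 in simp)
  qed
  have pfcQ: "prime_field_coeffs Q"
    unfolding Q_def by (intro pfc_add pfc_diff pfc_mult pfc_power pfc_Var pfcI)
  have IpQ: "Ip p = - (vf ^ (2 * p) * vg ^ p) + vf ^ p * vg ^ (2 * p) + Q"
    by (simp add: Q_def)
  show ?thesis
    using pfcI T1eq T2eq Dteq tdegI vdeg0 vdeg1 pfcQ Q0 Q1 IpQ by blast
qed

end
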